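(* Assume that $\Gamma_1$ and $\Gamma_2$ are regular inhomogeneous $Y$-semigroups and that $A_{\Gamma_1}(t)f=A_{\Gamma_2}(t)f$ for all $f \in Y_1$ and all $t \in J$. Then $\Gamma_1(s,t)f=\Gamma_2(s,t)f$ for all $f \in Y_1$ and all $(s,t) \in \Delta_J$. In particular, if $Y_1$ is dense in $Y$, then $\Gamma_1$ and $\Gamma_2$ agree on $Y$.
   Context: Let $(Y,\|\cdot\|)$ be a real separable Banach space and $(Y_1,\|\cdot\|_{Y_1})$ a real separable Banach space continuously embedded in $Y$. $J$ is either $\mathbb{R}^+$ or $[0,T_\infty]$ ($T_\infty>0$), $\Delta_J=\{(s,t)\in J^2:s\le t\}$, $J(s)=\{t\in J:t\ge s\}$. An inhomogeneous $Y$-semigroup is a map $\Gamma:\Delta_J\to\mathcal B(Y)$ with $\Gamma(t,t)=I$ and $\Gamma(s,r)\Gamma(r,t)=\Gamma(s,t)$ for $s\le r\le t$. Generator: for $t\in J$, $\mathcal D(A_\Gamma(t))$ is the set of $f\in Y$ such that $\lim_{h\downarrow0,\,t+h\in J}h^{-1}(\Gamma(t,t+h)-I)f$ and $\lim_{h\downarrow0,\,t-h\in J}h^{-1}(\Gamma(t-h,t)-I)f$ exist in $Y$ and are equal, $A_\Gamma(t)f$ being the common value; $\mathcal D(A_\Gamma)=\bigcap_t\mathcal D(A_\Gamma(t))$. $\Gamma$ is regular if: $Y_1\subseteq\mathcal D(A_\Gamma)$; $\Gamma(s,t)Y_1\subseteq Y_1$ for all $(s,t)\in\Delta_J$ and for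 every $f\in Y_1$, $t\in J$, $u\mapsto\Gamma(u,t)f$ is $\|\cdot\|_{Y_1}$-continuous on $\{u\in J:u\le t\}$; for every $f\in Y$, $s\in J$, $u\mapsto\Gamma(s,u)f$ is continuous from $J(s)$ into $Y$; and for all $(s,t)\in\Delta_J$, $f\in Y_1$, $u\mapsto\Gamma(s,u)A_\Gamma(u)f$ is Bochner integrable on $[s,t]$. *)

theory Defs
  imports "HOL-Analysis.Analysis"
begin

definition time_interval :: "real set \<Rightarrow> bool" where
  "time_interval J \<longleftrightarrow> J = {0..} \<or> (\<exists>T>0. J = {0..T})"

definition inhom_semigroup :: "real set \<Rightarrow> (real \<Rightarrow> real \<Rightarrow> ('a::real_normed_vector \<Rightarrow>\<^sub>L 'a)) \<Rightarrow> bool" where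
  "inhom_semigroup J \<Gamma> \<longleftrightarrow>
     (\<forall>t\<in>J. \<Gamma> t t = id_blinfun) \<and>
     (\<forall>s\<in>J. \<forall>r\<in>J. \<forall>t\<in>J. s \<le> r \<and> r \<le> t \<longrightarrow> \<Gamma> s r o\<^sub>L \<Gamma> r t = \<Gamma> s t)"

definition gen_right_lim :: "real set \<Rightarrow> (real \<Rightarrow> real \<Rightarrow> ('a::real_normed_vector \<Rightarrow>\<^sub>L 'a)) \<Rightarrow> real \<Rightarrow> 'a \<Rightarrow> 'a \<Rightarrow> bool" where
  "gen_right_lim J \<Gamma> t f L \<longleftrightarrow>
     ((\<lambda>h. (1 / h) *\<^sub>R (blinfun_apply (\<Gamma> t (t + h)) f - f)) \<longlongrightarrow> L)
       (at 0 within {h. 0 < h \<and> t + h \<in> J})"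

definition gen_left_lim :: "real set \<Rightarrow> (real \<Rightarrow> real \<Rightarrow> ('a::real_normed_vector \<Rightarrow>\<^sub>L 'a)) \<Rightarrow> real \<Rightarrow> 'a \<Rightarrow> 'a \<Rightarrow> bool" where
  "gen_left_lim J \<Gamma> t f L \<longleftrightarrow>
     ((\<lambda>h. (1 / h) *\<^sub>R (blinfun_apply (\<Gamma> (t - h) t) f - f)) \<longlongrightarrow> L)
       (at 0 within {h. 0 < h \<and> t - h \<in> J})"

text \<open>f \<in> D(A_\<Gamma>(t)): both one-sided limits exist (where meaningful) and are equal.\<close>
definition gen_dom :: "real set \<Rightarrow> (real \<Rightarrow> real \<Rightarrow> ('a::real_normed_vector \<Rightarrow>\<^sub>L 'a)) \<Rightarrow> real \<Rightarrow> 'a \<Rightarrow> bool" where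
  "gen_dom J \<Gamma> t f \<longleftrightarrow> (\<exists>L. gen_right_lim J \<Gamma> t f L \<and> gen_left_lim J \<Gamma> t f L)"

definition gen :: "real set \<Rightarrow> (real \<Rightarrow> real \<Rightarrow> ('a::real_normed_vector \<Rightarrow>\<^sub>L 'a)) \<Rightarrow> real \<Rightarrow> 'a \<Rightarrow> 'a" where
  "gen J \<Gamma> t f = (SOME L. gen_right_lim J \<Gamma> t f L \<and> gen_left_lim J \<Gamma> t f L)"

text \<open>Regularity w.r.t. Y1, given as a Banach space 'b continuously and injectively
  embedded in Y via i.\<close>
definition regular_semigroup ::
  "real set \<Rightarrow> ('b::real_normed_vector \<Rightarrow> 'a::{banach,second_countable_topology})
     \<Rightarrow> (real \<Rightarrow> real \<Rightarrow> ('a \<Rightarrow>\<^sub>L 'a)) \<Rightarrow> bool" where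
  "regular_semigroup J i \<Gamma> \<longleftrightarrow>
     inhom_semigroup J \<Gamma> \<and>
     (\<forall>t\<in>J. \<forall>x. gen_dom J \<Gamma> t (i x)) \<and>
     (\<forall>s\<in>J. \<forall>t\<in>J. s \<le> t \<longrightarrow> (\<forall>x. blinfun_apply (\<Gamma> s t) (i x) \<in> range i)) \<and>
     (\<forall>t\<in>J. \<forall>x. \<exists>g. continuous_on {u\<in>J. u \<le> t} g \<and>
          (\<forall>u\<in>{u\<in>J. u \<le> t}. i (g u) = blinfun_apply (\<Gamma> u t) (i x))) \<and>
     (\<forall>s\<in>J. \<forall>f. continuous_on {u\<in>J. s \<le> u} (\<lambda>u. blinfun_apply (\<Gamma> s u) f)) \<and>
     (\<forall>s\<in>J. \<forall>t\<in>J. s \<le> t \<longrightarrow> (\<forall>x.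
          set_integrable lborel {s..t} (\<lambda>u. blinfun_apply (\<Gamma> s u) (gen J \<Gamma> u (i x)))))"

end

theory Submission
  imports Defs
begin

lemma uniform_bound:
  fixes T :: "nat \<Rightarrow> 'c::banach \<Rightarrow>\<^sub>L 'd::real_normed_vector"
  assumes bd: "\<And>z. bounded (range (\<lambda>n. T n z))"
  shows "\<exists>B. \<forall>n. norm (T n) \<le> B"
proof -
  define E where "E k = {z. \<forall>n. norm (T n z) \<le> real k}" for k::nat
  have clo: "closed (E k)" for k
  proof -
    have "E k = (\<Inter>n. {z. norm (T n z) \<le> real k})" by (auto simp: E_def)
    moreover have "closed {z. norm (T n z) \<le> real k}" for n
      by (intro closed_Collect_le continuous_intros)
    ultimately show ?thesis by auto
  qed
  have un: "(\<Union>k. E k) = UNIV"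
  proof (rule set_eqI, rule iffI)
    fix z assume "z \<in> (\<Union>k. E k)" then show "z \<in> UNIV" by simp
  next
    fix z
    obtain B where B: "\<And>n. norm (T n z) \<le> B"
      using bd[of z] unfolding bounded_iff by auto
    have "z \<in> E (nat \<lceil>B\<rceil>)"
      unfolding E_def using B by (auto intro: order_trans[OF _ real_nat_ceiling_ge])
    then show "z \<in> (\<Union>k. E k)" by auto
  qed
  have "\<exists>k. interior (E k) \<noteq> {}"
  proof (rule ccontr)
    assume "\<not> ?thesis"
    then have "euclidean interior_of \<Union>(range E) = {}"
      by (intro Baire_category_alt) (auto simp: completely_metrizable_space_euclidean clo)
    then show False using un by simp
  qed
  then obtain k z0 where "z0 \<in> interior (E k)" by auto
  then obtain r where r: "r > 0" "ball z0 r \<subseteq> E k"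
    using mem_interior by blast
  have main: "norm (T n w) \<le> (4 * real k / r) * norm w" for n w
  proof (cases "w = 0")
    case True then show ?thesis by simp
  next
    case False
    define c where "c = r / (2 * norm w)"
    have c: "c > 0" using False r by (simp add: c_def)
    have nz: "norm (c *\<^sub>R w) = r / 2" using False r c by (simp add: c_def)
    have "z0 + c *\<^sub>R w \<in> ball z0 r" using nz r by (simp add: dist_norm)
    then have a: "norm (T n (z0 + c *\<^sub>R w)) \<le> real k" using r(2) unfolding E_def by blast
    have "z0 \<in> ball z0 r" using r by simp
    then have b: "norm (T n z0) \<le> real k" using r(2) unfolding E_def by blast
    have "T n (c *\<^sub>R w) = T n (z0 + c *\<^sub>R w) - T n z0"
      by (simp add: blinfun.add_right)
    then have "norm (T n (c *\<^sub>R w)) \<le> 2 * real k"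
      using a b norm_triangle_ineq4[of "T n (z0 + c *\<^sub>R w)" "T n z0"] by simp
    then have "c * norm (T n w) \<le> 2 * real k"
      using c by (simp add: blinfun.scaleR_right)
    then have "norm (T n w) \<le> 2 * real k / c" using c by (simp add: field_simps)
    also have "\<dots> = (4 * real k / r) * norm w" using r False by (simp add: c_def field_simps)
    finally show ?thesis .
  qed
  show ?thesis
    using r by (intro exI[of _ "4 * real k / r"] allI norm_blinfun_bound main) auto
qed

lemma bs_zero:
  fixes T :: "nat \<Rightarrow> 'c::banach \<Rightarrow>\<^sub>L 'd::real_normed_vector"
  assumes conv: "\<And>z. \<exists>l. (\<lambda>n. T n z) \<longlonglongrightarrow> l" and v: "v \<longlonglongrightarrow> 0"
  shows "(\<lambda>n. T n (v n)) \<longlonglongrightarrow> 0"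
proof -
  have "bounded (range (\<lambda>n. T n z))" for z
    using conv[of z] unfolding Bseq_eq_bounded[symmetric] by (auto intro: convergent_imp_Bseq convergentI)
  then obtain B where B: "\<And>n. norm (T n) \<le> B" using uniform_bound by blast
  have "norm (T n (v n)) \<le> B * norm (v n)" for n
    using norm_blinfun[of "T n" "v n"] B[of n] mult_right_mono[of "norm (T n)" B "norm (v n)"]
    by simp
  moreover have "(\<lambda>n. B * norm (v n)) \<longlonglongrightarrow> 0"
    using v by (intro tendsto_mult_right_zero tendsto_norm_zero)
  ultimately show ?thesis
    using Lim_null_comparison[of "\<lambda>n. T n (v n)" "\<lambda>n. B * norm (v n)" sequentially]
    by (simp add: always_eventually)
qed

lemma reg_facts:
  assumes "regular_semigroup J i \<Gamma>"
  shows "\<And>a b c y. a\<in>J \<Longrightarrow> b\<in>J \<Longrightarrow> c\<in>J \<Longrightarrow> a\<le>b \<Longrightarrow> b\<le>c \<Longrightarrow> \<Gamma> a b (\<Gamma> b c y) = \<Gamma> a c y"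
    and "\<And>a y. a\<in>J \<Longrightarrow> \<Gamma> a a y = y"
    and "\<And>u y. u\<in>J \<Longrightarrow> gen_left_lim J \<Gamma> u (i y) (gen J \<Gamma> u (i y)) \<and> gen_right_lim J \<Gamma> u (i y) (gen J \<Gamma> u (i y))"
    and "\<And>a b y. a\<in>J \<Longrightarrow> b\<in>J \<Longrightarrow> a\<le>b \<Longrightarrow> \<Gamma> a b (i y) \<in> range i"
    and "\<And>t y. t\<in>J \<Longrightarrow> \<exists>g. continuous_on {u\<in>J. u \<le> t} g \<and>
          (\<forall>u\<in>{u\<in>J. u \<le> t}. i (g u) = blinfun_apply (\<Gamma> u t) (i y))"
    and "\<And>a f. a\<in>J \<Longrightarrow> continuous_on {u\<in>J. a \<le> u} (\<lambda>u. blinfun_apply (\<Gamma> a u) f)"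
proof -
  note R = assms[unfolded regular_semigroup_def inhom_semigroup_def]
  show "\<And>a b c y. a\<in>J \<Longrightarrow> b\<in>J \<Longrightarrow> c\<in>J \<Longrightarrow> a\<le>b \<Longrightarrow> b\<le>c \<Longrightarrow> \<Gamma> a b (\<Gamma> b c y) = \<Gamma> a c y"
  proof -
    fix a b c y assume h: "a\<in>J" "b\<in>J" "c\<in>J" "a\<le>b" "b\<le>c"
    then have "\<Gamma> a b o\<^sub>L \<Gamma> b c = \<Gamma> a c" using R by blast
    then have "(\<Gamma> a b o\<^sub>L \<Gamma> b c) y = \<Gamma> a c y" by simp
    then show "\<Gamma> a b (\<Gamma> b c y) = \<Gamma> a c y" by simp
  qed
  show "\<And>a y. a\<in>J \<Longrightarrow> \<Gamma> a a y = y" using R by simp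
  show "\<And>u y. u\<in>J \<Longrightarrow> gen_left_lim J \<Gamma> u (i y) (gen J \<Gamma> u (i y)) \<and> gen_right_lim J \<Gamma> u (i y) (gen J \<Gamma> u (i y))"
  proof -
    fix u y assume "u \<in> J"
    then have "gen_dom J \<Gamma> u (i y)" using R by blast
    then show "gen_left_lim J \<Gamma> u (i y) (gen J \<Gamma> u (i y)) \<and> gen_right_lim J \<Gamma> u (i y) (gen J \<Gamma> u (i y))"
    proof -
      obtain L where "gen_right_lim J \<Gamma> u (i y) L \<and> gen_left_lim J \<Gamma> u (i y) L"
        using \<open>gen_dom J \<Gamma> u (i y)\<close> unfolding gen_dom_def by blast
      then have "gen_right_lim J \<Gamma> u (i y) (gen J \<Gamma> u (i y)) \<and> gen_left_lim J \<Gamma> u (i y) (gen J \<Gamma> u (i y))"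
        unfolding gen_def by (rule someI)
      then show ?thesis by blast
    qed
  qed
  show "\<And>a b y. a\<in>J \<Longrightarrow> b\<in>J \<Longrightarrow> a\<le>b \<Longrightarrow> \<Gamma> a b (i y) \<in> range i" using R by blast
  show "\<And>t y. t\<in>J \<Longrightarrow> \<exists>g. continuous_on {u\<in>J. u \<le> t} g \<and>
          (\<forall>u\<in>{u\<in>J. u \<le> t}. i (g u) = blinfun_apply (\<Gamma> u t) (i y))" using R by blast
  show "\<And>a f. a\<in>J \<Longrightarrow> continuous_on {u\<in>J. a \<le> u} (\<lambda>u. blinfun_apply (\<Gamma> a u) f)"
    using R by blast
qed

lemma J_conv: "time_interval J \<Longrightarrow> a \<in> J \<Longrightarrow> b \<in> J \<Longrightarrow> a \<le> y \<Longrightarrow> y \<le> b \<Longrightarrow> y \<in> J"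
  unfolding time_interval_def by auto

lemma agree:
  fixes J :: "real set"
    and i :: "'b::{banach,second_countable_topology} \<Rightarrow> 'a::{banach,second_countable_topology}"
    and \<Gamma>1 \<Gamma>2 :: "real \<Rightarrow> real \<Rightarrow> ('a \<Rightarrow>\<^sub>L 'a)"
  assumes TJ: "time_interval J" and bl: "bounded_linear i"
    and r1: "regular_semigroup J i \<Gamma>1" and r2: "regular_semigroup J i \<Gamma>2"
    and eq: "\<forall>x. \<forall>t\<in>J. gen J \<Gamma>1 t (i x) = gen J \<Gamma>2 t (i x)"
    and st: "s\<in>J" "t\<in>J" "s\<le>t"
  shows "\<Gamma>1 s t (i x) = \<Gamma>2 s t (i x)"
proof -
  note F1 = reg_facts[OF r1] and F2 = reg_facts[OF r2]
  have inJ: "\<And>y. s \<le> y \<Longrightarrow> y \<le> t \<Longrightarrow> y \<in> J" using J_conv[OF TJ st(1,2)] by blast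
  define \<phi> where "\<phi> u = \<Gamma>1 s u (\<Gamma>2 u t (i x))" for u
  have deriv: "(\<phi> has_vector_derivative 0) (at u within {s..t})" if u: "u \<in> {s..t}" for u
  proof -
    have uJ: "u \<in> J" using u inJ by auto
    define Q where "Q y = (1 / norm (y - u)) *\<^sub>R (\<phi> y - \<phi> u)" for y
    have left: "(Q \<longlongrightarrow> 0) (at u within {s..u})"
    proof (unfold tendsto_at_iff_sequentially, intro allI impI)
      fix X assume Xs: "\<forall>n. X n \<in> {s..u} - {u}" and Xl: "X \<longlonglongrightarrow> u"
      obtain x' where gx: "\<Gamma>2 u t (i x) = i x'" using F2(4)[OF uJ st(2), of x] u by auto
      define g where "g = i x'"
      define h where "h n = u - X n" for n
      have hpos: "h n > 0" for n using Xs[rule_format, of n] h_def by auto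
      have XJ: "X n \<in> J" for n using Xs[rule_format, of n] u inJ by auto
      have Xh: "u - h n = X n" for n by (simp add: h_def)
      have hl: "h \<longlonglongrightarrow> 0" using tendsto_diff[OF tendsto_const[of u] Xl] unfolding h_def by simp
      have hin: "\<forall>n. h n \<in> {r. 0 < r \<and> u - r \<in> J} - {0}" using hpos XJ Xh by auto
      have L1: "(\<lambda>n. (1 / h n) *\<^sub>R (\<Gamma>1 (X n) u g - g)) \<longlonglongrightarrow> gen J \<Gamma>1 u g"
      proof -
        from F1(3)[OF uJ, of x'] have "gen_left_lim J \<Gamma>1 u g (gen J \<Gamma>1 u g)" by (simp add: g_def)
        then have "((\<lambda>r. (1 / r) *\<^sub>R (\<Gamma>1 (u - r) u g - g)) \<circ> h) \<longlonglongrightarrow> gen J \<Gamma>1 u g"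
          unfolding gen_left_lim_def tendsto_at_iff_sequentially using hin hl by blast
        then show ?thesis by (simp add: comp_def Xh)
      qed
      have L2: "(\<lambda>n. (1 / h n) *\<^sub>R (\<Gamma>2 (X n) u g - g)) \<longlonglongrightarrow> gen J \<Gamma>2 u g"
      proof -
        from F2(3)[OF uJ, of x'] have "gen_left_lim J \<Gamma>2 u g (gen J \<Gamma>2 u g)" by (simp add: g_def)
        then have "((\<lambda>r. (1 / r) *\<^sub>R (\<Gamma>2 (u - r) u g - g)) \<circ> h) \<longlonglongrightarrow> gen J \<Gamma>2 u g"
          unfolding gen_left_lim_def tendsto_at_iff_sequentially using hin hl by blast
        then show ?thesis by (simp add: comp_def Xh)
      qed
      define w where "w n = (1 / h n) *\<^sub>R ((\<Gamma>1 (X n) u g - g) - (\<Gamma>2 (X n) u g - g))" for n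
      have geq: "gen J \<Gamma>1 u g = gen J \<Gamma>2 u g" using eq uJ by (simp add: g_def)
      have wl: "w \<longlonglongrightarrow> 0"
        using tendsto_diff[OF L1 L2] unfolding w_def geq by (simp add: scaleR_diff_right)
      have conv: "\<exists>l. (\<lambda>n. \<Gamma>1 s (X n) z) \<longlonglongrightarrow> l" for z
      proof -
        have "(\<lambda>n. \<Gamma>1 s (X n) z) \<longlonglongrightarrow> \<Gamma>1 s u z"
          by (rule continuous_on_tendsto_compose[OF F1(6)[OF st(1)] Xl]) (use uJ u XJ Xs in auto)
        then show ?thesis by blast
      qed
      have bsz: "(\<lambda>n. \<Gamma>1 s (X n) (w n)) \<longlonglongrightarrow> 0" by (rule bs_zero[OF conv wl])
      have Qeq: "Q (X n) = - \<Gamma>1 s (X n) (w n)" for n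
      proof -
        have Xle: "s \<le> X n" "X n \<le> u" using Xs by auto
        have nh: "norm (X n - u) = h n" using hpos[of n] by (simp add: h_def abs_if)
        have a: "\<phi> (X n) = \<Gamma>1 s (X n) (\<Gamma>2 (X n) u g)"
          using F2(1)[OF XJ uJ st(2) Xle(2)] u by (simp add: \<phi>_def g_def gx[symmetric])
        have b: "\<phi> u = \<Gamma>1 s (X n) (\<Gamma>1 (X n) u g)"
          using F1(1)[OF st(1) XJ uJ Xle] by (simp add: \<phi>_def g_def gx[symmetric])
        show ?thesis unfolding Q_def a b nh w_def
          by (simp add: blinfun.diff_right blinfun.scaleR_right algebra_simps)
      qed
      show "(Q \<circ> X) \<longlonglongrightarrow> 0" using tendsto_minus[OF bsz] by (simp add: comp_def Qeq)
    qed
    have right: "(Q \<longlongrightarrow> 0) (at u within {u..t})"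
    proof (unfold tendsto_at_iff_sequentially, intro allI impI)
      fix X assume Xs: "\<forall>n. X n \<in> {u..t} - {u}" and Xl: "X \<longlonglongrightarrow> u"
      obtain G where Gc: "continuous_on {v\<in>J. v \<le> t} G"
        and Gi: "\<forall>v\<in>{v\<in>J. v \<le> t}. i (G v) = \<Gamma>2 v t (i x)"
        using F2(5)[OF st(2), of x] by blast
      define h where "h n = X n - u" for n
      have hpos: "h n > 0" for n using Xs[rule_format, of n] h_def by auto
      have XJ: "X n \<in> J" for n using Xs[rule_format, of n] u inJ by auto
      have Xle: "u \<le> X n" "X n \<le> t" for n using Xs[rule_format, of n] by auto
      have Xh: "u + h n = X n" for n by (simp add: h_def)
      have hl: "h \<longlonglongrightarrow> 0" using tendsto_diff[OF Xl tendsto_const[of u]] unfolding h_def by simp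
      have hin: "\<forall>n. h n \<in> {r. 0 < r \<and> u + r \<in> J} - {0}" using hpos XJ Xh by auto
      have Gl: "(\<lambda>n. G (X n)) \<longlonglongrightarrow> G u"
        by (rule continuous_on_tendsto_compose[OF Gc Xl]) (use uJ u XJ Xle in auto)
      have Gl0: "(\<lambda>n. G (X n) - G u) \<longlonglongrightarrow> 0" using Gl by (rule LIM_zero)
      have key: "(\<lambda>n. (1 / h n) *\<^sub>R (\<Gamma> u (X n) (i (G (X n))) - i (G (X n)))) \<longlonglongrightarrow> gen J \<Gamma> u (i (G u))"
        if R: "regular_semigroup J i \<Gamma>" for \<Gamma>
      proof -
        note F = reg_facts[OF R]
        define T where "T n = (1 / h n) *\<^sub>R ((\<Gamma> u (X n) - id_blinfun) o\<^sub>L Blinfun i)" for n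
        have Tap: "T n y = (1 / h n) *\<^sub>R (\<Gamma> u (X n) (i y) - i y)" for n y
          by (simp add: T_def bounded_linear_Blinfun_apply[OF bl] blinfun.diff_left scaleR_blinfun.rep_eq minus_blinfun.rep_eq)
        have Tc: "(\<lambda>n. T n y) \<longlonglongrightarrow> gen J \<Gamma> u (i y)" for y
        proof -
          from F(3)[OF uJ, of y] have "gen_right_lim J \<Gamma> u (i y) (gen J \<Gamma> u (i y))" by simp
          then have "((\<lambda>r. (1 / r) *\<^sub>R (\<Gamma> u (u + r) (i y) - i y)) \<circ> h) \<longlonglongrightarrow> gen J \<Gamma> u (i y)"
            unfolding gen_right_lim_def tendsto_at_iff_sequentially using hin hl by blast
          then show ?thesis by (simp add: comp_def Xh Tap)
        qed
        have z: "(\<lambda>n. T n (G (X n) - G u)) \<longlonglongrightarrow> 0"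
          by (rule bs_zero[OF _ Gl0]) (use Tc in blast)
        have "(\<lambda>n. T n (G u) + T n (G (X n) - G u)) \<longlonglongrightarrow> gen J \<Gamma> u (i (G u)) + 0"
          by (rule tendsto_add[OF Tc z])
        then have "(\<lambda>n. T n (G (X n))) \<longlonglongrightarrow> gen J \<Gamma> u (i (G u))"
          by (simp add: blinfun.diff_right)
        then show ?thesis by (simp add: Tap)
      qed
      have geq: "gen J \<Gamma>1 u (i (G u)) = gen J \<Gamma>2 u (i (G u))" using eq uJ by simp
      have dl: "(\<lambda>n. (1 / h n) *\<^sub>R (\<Gamma>1 u (X n) (i (G (X n))) - i (G (X n)))
                 - (1 / h n) *\<^sub>R (\<Gamma>2 u (X n) (i (G (X n))) - i (G (X n)))) \<longlonglongrightarrow> 0"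
        using tendsto_diff[OF key[OF r1] key[OF r2]] geq by simp
      have fin: "(\<lambda>n. \<Gamma>1 s u ((1 / h n) *\<^sub>R (\<Gamma>1 u (X n) (i (G (X n))) - i (G (X n)))
                 - (1 / h n) *\<^sub>R (\<Gamma>2 u (X n) (i (G (X n))) - i (G (X n))))) \<longlonglongrightarrow> \<Gamma>1 s u 0"
        by (rule bounded_linear.tendsto[OF blinfun.bounded_linear_right dl])
      have Qeq: "Q (X n) = \<Gamma>1 s u ((1 / h n) *\<^sub>R (\<Gamma>1 u (X n) (i (G (X n))) - i (G (X n)))
                 - (1 / h n) *\<^sub>R (\<Gamma>2 u (X n) (i (G (X n))) - i (G (X n))))" for n
      proof -
        have nh: "norm (X n - u) = h n" using hpos[of n] by (simp add: h_def abs_if)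
        have gn: "i (G (X n)) = \<Gamma>2 (X n) t (i x)" using Gi XJ Xle by auto
        have a: "\<phi> (X n) = \<Gamma>1 s u (\<Gamma>1 u (X n) (i (G (X n))))"
          using F1(1)[OF st(1) uJ XJ _ Xle(1)] u by (simp add: \<phi>_def gn)
        have b: "\<phi> u = \<Gamma>1 s u (\<Gamma>2 u (X n) (i (G (X n))))"
          using F2(1)[OF uJ XJ st(2) Xle] by (simp add: \<phi>_def gn)
        show ?thesis unfolding Q_def a b nh
          by (simp add: blinfun.diff_right blinfun.scaleR_right algebra_simps)
      qed
      show "(Q \<circ> X) \<longlonglongrightarrow> 0" using fin by (simp add: comp_def Qeq)
    qed
    have "{s..t} = {s..u} \<union> {u..t}" using u by auto
    then have "(Q \<longlongrightarrow> 0) (at u within {s..t})" using left right by (simp add: Lim_within_Un)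
    then show ?thesis unfolding has_vector_derivative_def has_derivative_within Q_def by simp
  qed
  obtain c where "\<And>y. y \<in> {s..t} \<Longrightarrow> \<phi> y = c"
    using has_vector_derivative_zero_constant[of "{s..t}" \<phi>] deriv by auto
  then have "\<phi> s = \<phi> t" using st by auto
  moreover have "\<phi> s = \<Gamma>2 s t (i x)" using F1(2)[OF st(1)] by (simp add: \<phi>_def)
  moreover have "\<phi> t = \<Gamma>1 s t (i x)" using F2(2)[OF st(2)] by (simp add: \<phi>_def)
  ultimately show ?thesis by simp
qed

theorem corollary2p11:
  fixes J :: "real set"
    and i :: "'b::{banach,second_countable_topology} \<Rightarrow> 'a::{banach,second_countable_topology}"
    and \<Gamma>1 \<Gamma>2 :: "real \<Rightarrow> real \<Rightarrow> ('a \<Rightarrow>\<^sub>L 'a)"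
  assumes "time_interval J"
    and "bounded_linear i" and "inj i"
    and "regular_semigroup J i \<Gamma>1" and "regular_semigroup J i \<Gamma>2"
    and "\<forall>x. \<forall>t\<in>J. gen J \<Gamma>1 t (i x) = gen J \<Gamma>2 t (i x)"
  shows "(\<forall>s\<in>J. \<forall>t\<in>J. s \<le> t \<longrightarrow>
            (\<forall>x. blinfun_apply (\<Gamma>1 s t) (i x) = blinfun_apply (\<Gamma>2 s t) (i x)))
       \<and> (closure (range i) = UNIV \<longrightarrow>
            (\<forall>s\<in>J. \<forall>t\<in>J. s \<le> t \<longrightarrow> \<Gamma>1 s t = \<Gamma>2 s t))"
proof -
  have A: "\<forall>s\<in>J. \<forall>t\<in>J. s \<le> t \<longrightarrow>
            (\<forall>x. blinfun_apply (\<Gamma>1 s t) (i x) = blinfun_apply (\<Gamma>2 s t) (i x))"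
    using agree[OF assms(1,2,4,5,6)] by blast
  have B: "\<Gamma>1 s t = \<Gamma>2 s t" if d: "closure (range i) = UNIV" and st: "s\<in>J" "t\<in>J" "s \<le> t" for s t
  proof -
    have "closed {y. \<Gamma>1 s t y = \<Gamma>2 s t y}"
      by (intro closed_Collect_eq continuous_intros)
    moreover have "range i \<subseteq> {y. \<Gamma>1 s t y = \<Gamma>2 s t y}" using A st by auto
    ultimately have "closure (range i) \<subseteq> {y. \<Gamma>1 s t y = \<Gamma>2 s t y}"
      by (rule closure_minimal[rotated])
    then show ?thesis using d by (intro blinfun_eqI) auto
  qed
  show ?thesis using A B by blast
qed

end
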